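(* Let $\mathcal{X}=[0,1]^D$ and $f\in\mathcal{B}$. For any $N_1\in\mathbb{N}_{>0}$, any $\epsilon>0$, and any probability measure $\pi$ on $\mathcal{X}$, there exists a sampled network $\Phi$ with one hidden layer of $N_1$ neurons and ReLU activation such that $$\|f-\Phi\|_2^2=\int_{\mathcal{X}}|f(x)-\Phi(x)|^2\,d\pi(x)<\frac{(3+\epsilon)\|f\|_{\mathcal{B}}^2}{N_1}.$$
   Context: Let $\phi(t)=\max\{t,0\}$ (ReLU) and $\Omega=\mathbb{R}\times\mathbb{R}^D\times\mathbb{R}$. The Barron space is $\mathcal{B}=\{f\colon f(x)=\int_\Omega w_2\,\phi(\langle w_1,x\rangle-b)\,d\mu(b,w_1,w_2)\text{ for some probability measure }\mu\text{ on }\Omega,\ \|f\|_{\mathcal{B}}<\infty\}$, with Barron norm $\|f\|_{\mathcal{B}}=\inf_\mu\max_{(b,w_1,w_2)\in\mathrm{supp}(\mu)}|w_2|(\|w_1\|_1+|b|)$, the infimum over all $\mu$ representing $f$. A sampled network with one hidden layer of $N_1$ neurons and ReLU activation is a function $\Phi(x)=\sum_{i=1}^{N_1}w_{2,i}\,\phi(\langle w_{1,i},x\rangle-b_{1,i})-b_2$ where, for each $i$, there are points $x^{(1)}_i\neq x^{(2)}_i$ in $\mathcal{X}$ with $w_{1,i}=\frac{x^{(2)}_i-x^{(1)}_i}{\|x^{(2)}_i-x^{(1)}_i\|^2}$ and $b_{1,i}=\langle w_{1,i},x^{(1)}_i\rangle$ (Euclidean norm and inner product), and the output-layer coefficients $w_{2,i}\in\mathbb{R}$,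 $b_2\in\mathbb{R}$ are unrestricted. *)

theory Defs
  imports "HOL-Probability.Probability"
begin

definition relu :: "real \<Rightarrow> real" where
  "relu t = max t 0"

text \<open>The unit cube [0,1]^D, with D = CARD('d).\<close>
definition unit_cube :: "(real^'d) set" where
  "unit_cube = {x. \<forall>i. 0 \<le> x$i \<and> x$i \<le> 1}"

definition l1norm :: "real^'d \<Rightarrow> real" where
  "l1norm w = (\<Sum>i\<in>UNIV. \<bar>w$i\<bar>)"

definition msupp :: "'a::topological_space measure \<Rightarrow> 'a set" where
  "msupp \<mu> = {\<omega>. \<forall>U. open U \<and> \<omega> \<in> U \<longrightarrow> emeasure \<mu> U > 0}"

definition barron_represents ::
  "(real \<times> (real^'d) \<times> real) measure \<Rightarrow> (real^'d \<Rightarrow> real) \<Rightarrow> (real^'d) set \<Rightarrow> bool" where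
  "barron_represents \<mu> f X \<longleftrightarrow> prob_space \<mu> \<and> sets \<mu> = sets borel \<and>
     (\<forall>x\<in>X. integrable \<mu> (\<lambda>(b, w1, w2). w2 * relu (w1 \<bullet> x - b)) \<and>
             f x = (\<integral>\<omega>. (case \<omega> of (b, w1, w2) \<Rightarrow> w2 * relu (w1 \<bullet> x - b)) \<partial>\<mu>))"

definition barron_bounds :: "(real^'d \<Rightarrow> real) \<Rightarrow> (real^'d) set \<Rightarrow> real set" where
  "barron_bounds f X = {C. \<exists>\<mu>. barron_represents \<mu> f X \<and>
       (\<forall>(b, w1, w2)\<in>msupp \<mu>. \<bar>w2\<bar> * (l1norm w1 + \<bar>b\<bar>) \<le> C)}"

definition in_barron :: "(real^'d \<Rightarrow> real) \<Rightarrow> (real^'d) set \<Rightarrow> bool" where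
  "in_barron f X \<longleftrightarrow> barron_bounds f X \<noteq> {}"

definition barron_norm :: "(real^'d \<Rightarrow> real) \<Rightarrow> (real^'d) set \<Rightarrow> real" where
  "barron_norm f X = Inf (barron_bounds f X)"

definition sampled_network :: "(real^'d) set \<Rightarrow> nat \<Rightarrow> (real^'d \<Rightarrow> real) \<Rightarrow> bool" where
  "sampled_network X N \<Phi> \<longleftrightarrow>
     (\<exists>(x1 :: nat \<Rightarrow> real^'d) (x2 :: nat \<Rightarrow> real^'d) (w2 :: nat \<Rightarrow> real) (b2 :: real).
        (\<forall>i<N. x1 i \<in> X \<and> x2 i \<in> X \<and> x1 i \<noteq> x2 i) \<and>
        \<Phi> = (\<lambda>x. (\<Sum>i<N.
               (let w1 = (1 / (norm (x2 i - x1 i))\<^sup>2) *\<^sub>R (x2 i - x1 i);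
                    b1 = w1 \<bullet> x1 i
                in w2 i * relu (w1 \<bullet> x - b1))) - b2))"

end

theory Submission
  imports Defs
begin

lemma exists_le_integral:
  fixes F :: "'a \<Rightarrow> real"
  assumes "prob_space M" "integrable M F"
  shows "\<exists>\<omega>\<in>space M. F \<omega> \<le> integral\<^sup>L M F"
proof (rule ccontr)
  interpret prob_space M by fact
  assume "\<not> ?thesis"
  then have lt: "\<And>\<omega>. \<omega> \<in> space M \<Longrightarrow> integral\<^sup>L M F < F \<omega>" by auto
  let ?G = "\<lambda>\<omega>. F \<omega> - integral\<^sup>L M F"
  have ig: "integrable M ?G" using assms(2) by auto
  have "integral\<^sup>L M ?G = 0" using assms(2) by (simp add: prob_space)
  moreover have "AE \<omega> in M. 0 \<le> ?G \<omega>" using lt by (auto intro!: AE_I2 less_imp_le)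
  ultimately have "AE \<omega> in M. ?G \<omega> = 0" using integral_nonneg_eq_0_iff_AE[OF ig] by simp
  then have "AE \<omega> in M. False" using AE_space by eventually_elim (use lt in fastforce)
  then show False by simp
qed

lemma sq_bound: fixes y B :: real assumes "\<bar>y\<bar> \<le> B" shows "y\<^sup>2 \<le> B\<^sup>2"
proof -
  have "\<bar>y\<bar>\<^sup>2 \<le> B\<^sup>2" using assms by (intro power_mono) auto
  then show ?thesis by simp
qed

lemma sq_bound_abs: fixes y B :: real assumes "\<bar>y\<bar> \<le> B" shows "\<bar>y\<^sup>2\<bar> \<le> B\<^sup>2"
  using sq_bound[OF assms] by simp

lemma maurey_step:
  fixes M :: "'a measure" and P :: "'b measure" and h :: "'a \<Rightarrow> 'b \<Rightarrow> real"
  assumes pM: "prob_space M" and pP: "prob_space P"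
    and hm[measurable]: "(\<lambda>(\<omega>,x). h \<omega> x) \<in> borel_measurable (M \<Otimes>\<^sub>M P)"
    and hb: "\<And>\<omega> x. \<omega> \<in> space M \<Longrightarrow> x \<in> space P \<Longrightarrow> \<bar>h \<omega> x\<bar> \<le> C"
    and Fm[measurable]: "F \<in> borel_measurable P"
    and Fe: "\<And>x. x \<in> space P \<Longrightarrow> F x = (\<integral>\<omega>. h \<omega> x \<partial>M)"
    and Tm[measurable]: "T \<in> borel_measurable P"
    and Tb: "\<And>x. x \<in> space P \<Longrightarrow> \<bar>T x\<bar> \<le> K"
  shows "\<exists>\<omega>\<in>space M. (\<integral>x. (T x + h \<omega> x - F x)\<^sup>2 \<partial>P) \<le> (\<integral>x. (T x)\<^sup>2 \<partial>P) + C\<^sup>2"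
proof -
  interpret M: prob_space M by fact
  interpret PP: prob_space P by fact
  interpret MP: pair_prob_space M P by unfold_locales
  have C0: "0 \<le> C" using hb M.not_empty PP.not_empty by (metis abs_ge_zero all_not_in_conv order.trans)
  have Fb: "\<bar>F x\<bar> \<le> C" if x: "x \<in> space P" for x
  proof -
    have hmx: "(\<lambda>\<omega>. h \<omega> x) \<in> borel_measurable M" using x by measurable
    have "\<bar>F x\<bar> \<le> (\<integral>\<omega>. \<bar>h \<omega> x\<bar> \<partial>M)" unfolding Fe[OF x] by (rule integral_abs_bound)
    also have "\<dots> \<le> (\<integral>\<omega>. C \<partial>M)"
      by (rule integral_mono) (auto intro!: M.integrable_const_bound[where B=C] hmx hb x borel_measurable_abs)
    finally show ?thesis by (simp add: M.prob_space)
  qed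
  define H where "H = (\<lambda>\<omega> x. (T x + h \<omega> x - F x)\<^sup>2)"
  have Hm: "(\<lambda>(\<omega>,x). H \<omega> x) \<in> borel_measurable (M \<Otimes>\<^sub>M P)" unfolding H_def by measurable
  define B where "B = (K + C + C)\<^sup>2"
  have Hb: "\<bar>H \<omega> x\<bar> \<le> B" if "\<omega> \<in> space M" "x \<in> space P" for \<omega> x
  proof -
    have "\<bar>T x + h \<omega> x - F x\<bar> \<le> K + C + C" using Tb[of x] hb[of \<omega> x] Fb[of x] that by linarith
    then show ?thesis unfolding H_def B_def by (rule sq_bound_abs)
  qed
  have Hint: "integrable (M \<Otimes>\<^sub>M P) (\<lambda>(\<omega>,x). H \<omega> x)"
    by (rule MP.P.integrable_const_bound[where B=B])
       (auto intro!: AE_I2 Hm Hb simp: space_pair_measure)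
  have Hint1: "integrable M (\<lambda>\<omega>. \<integral>x. H \<omega> x \<partial>P)" by (rule MP.integrable_fst[OF Hint])
  obtain \<omega> where \<omega>: "\<omega> \<in> space M" "(\<integral>x. H \<omega> x \<partial>P) \<le> (\<integral>\<omega>. (\<integral>x. H \<omega> x \<partial>P) \<partial>M)"
    using exists_le_integral[OF pM Hint1] by blast
  have "(\<integral>\<omega>. (\<integral>x. H \<omega> x \<partial>P) \<partial>M) = (\<integral>x. (\<integral>\<omega>. H \<omega> x \<partial>M) \<partial>P)"
    using MP.Fubini_integral[OF Hint] by simp
  also have "\<dots> \<le> (\<integral>x. (T x)\<^sup>2 + C\<^sup>2 \<partial>P)"
  proof (rule integral_mono)
    show "integrable P (\<lambda>x. \<integral>\<omega>. H \<omega> x \<partial>M)" by (rule MP.integrable_snd[OF Hint])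
    show "integrable P (\<lambda>x. (T x)\<^sup>2 + C\<^sup>2)"
      by (rule PP.integrable_const_bound[where B="K\<^sup>2 + C\<^sup>2"]) (auto intro!: AE_I2 sq_bound_abs sq_bound Tb)
    fix x assume x: "x \<in> space P"
    have hmx: "(\<lambda>\<omega>. h \<omega> x) \<in> borel_measurable M" using x by measurable
    have hi: "integrable M (\<lambda>\<omega>. h \<omega> x)"
      by (rule M.integrable_const_bound[where B=C]) (auto intro!: AE_I2 hmx hb x)
    have hi2: "integrable M (\<lambda>\<omega>. (h \<omega> x)\<^sup>2)"
      by (rule M.integrable_const_bound[where B="C\<^sup>2"]) (auto intro!: AE_I2 hmx hb x sq_bound_abs sq_bound borel_measurable_power)
    have "(\<integral>\<omega>. (h \<omega> x)\<^sup>2 \<partial>M) \<le> (\<integral>\<omega>. C\<^sup>2 \<partial>M)"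
      by (rule integral_mono) (auto intro!: hi2 hb x sq_bound)
    then have h2: "(\<integral>\<omega>. (h \<omega> x)\<^sup>2 \<partial>M) \<le> C\<^sup>2" by (simp add: M.prob_space)
    define a where "a = T x - F x"
    have "(\<integral>\<omega>. H \<omega> x \<partial>M) = (\<integral>\<omega>. a\<^sup>2 + 2 * a * h \<omega> x + (h \<omega> x)\<^sup>2 \<partial>M)"
      unfolding H_def a_def by (rule Bochner_Integration.integral_cong) (auto simp: power2_eq_square algebra_simps)
    also have "\<dots> = a\<^sup>2 + 2 * a * F x + (\<integral>\<omega>. (h \<omega> x)\<^sup>2 \<partial>M)"
    proof -
      have "(\<integral>\<omega>. a\<^sup>2 + 2 * a * h \<omega> x + (h \<omega> x)\<^sup>2 \<partial>M)
          = (\<integral>\<omega>. a\<^sup>2 + 2 * a * h \<omega> x \<partial>M) + (\<integral>\<omega>. (h \<omega> x)\<^sup>2 \<partial>M)"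
        using hi hi2 by (intro Bochner_Integration.integral_add) auto
      moreover have "(\<integral>\<omega>. a\<^sup>2 + 2 * a * h \<omega> x \<partial>M) = a\<^sup>2 + (\<integral>\<omega>. 2 * a * h \<omega> x \<partial>M)"
        using hi by (subst Bochner_Integration.integral_add) (auto simp: M.prob_space)
      moreover have "(\<integral>\<omega>. 2 * a * h \<omega> x \<partial>M) = 2 * a * F x"
        by (simp add: Fe[OF x])
      ultimately show ?thesis by simp
    qed
    also have "\<dots> \<le> (T x)\<^sup>2 + C\<^sup>2"
    proof -
      have "a\<^sup>2 + 2 * a * F x = (T x)\<^sup>2 - (F x)\<^sup>2" unfolding a_def by (simp add: power2_eq_square algebra_simps)
      then show ?thesis using h2 zero_le_power2[of "F x"] by linarith
    qed
    finally show "(\<integral>\<omega>. H \<omega> x \<partial>M) \<le> (T x)\<^sup>2 + C\<^sup>2" .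
  qed
  also have "\<dots> = (\<integral>x. (T x)\<^sup>2 \<partial>P) + C\<^sup>2"
  proof -
    have "integrable P (\<lambda>x. (T x)\<^sup>2)"
      by (rule PP.integrable_const_bound[where B="K\<^sup>2"]) (auto intro!: AE_I2 sq_bound_abs sq_bound Tb)
    then show ?thesis by (subst Bochner_Integration.integral_add) (auto simp: PP.prob_space)
  qed
  finally show ?thesis using \<omega> unfolding H_def by (blast intro: order_trans)
qed

lemma maurey:
  fixes M :: "'a measure" and P :: "'b measure" and h :: "'a \<Rightarrow> 'b \<Rightarrow> real"
  assumes pM: "prob_space M" and pP: "prob_space P"
    and hm[measurable]: "(\<lambda>(\<omega>,x). h \<omega> x) \<in> borel_measurable (M \<Otimes>\<^sub>M P)"
    and hb: "\<And>\<omega> x. \<omega> \<in> space M \<Longrightarrow> x \<in> space P \<Longrightarrow> \<bar>h \<omega> x\<bar> \<le> C"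
    and Fm[measurable]: "F \<in> borel_measurable P"
    and Fe: "\<And>x. x \<in> space P \<Longrightarrow> F x = (\<integral>\<omega>. h \<omega> x \<partial>M)"
    and Fb: "\<And>x. x \<in> space P \<Longrightarrow> \<bar>F x\<bar> \<le> C"
  shows "\<exists>\<omega>::nat\<Rightarrow>'a. (\<forall>i. \<omega> i \<in> space M) \<and>
           (\<integral>x. (\<Sum>i<k. h (\<omega> i) x - F x)\<^sup>2 \<partial>P) \<le> real k * C\<^sup>2"
proof (induction k)
  case 0
  interpret M: prob_space M by fact
  obtain a where "a \<in> space M" using M.not_empty by blast
  then show ?case by (intro exI[of _ "\<lambda>_. a"]) auto
next
  case (Suc k)
  then obtain \<omega> where \<omega>: "\<forall>i. \<omega> i \<in> space M"
    "(\<integral>x. (\<Sum>i<k. h (\<omega> i) x - F x)\<^sup>2 \<partial>P) \<le> real k * C\<^sup>2" by blast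
  have hx: "(\<lambda>x. h a x) \<in> borel_measurable P" if "a \<in> space M" for a
    using measurable_compose[OF measurable_Pair1'[OF that] hm] by simp
  define T where "T = (\<lambda>x. \<Sum>i<k. h (\<omega> i) x - F x)"
  have Tm: "T \<in> borel_measurable P" unfolding T_def
    using hx \<omega>(1) by (intro borel_measurable_sum borel_measurable_diff) auto
  have Tb: "\<bar>T x\<bar> \<le> real k * (C + C)" if x: "x \<in> space P" for x
  proof -
    have "\<bar>T x\<bar> \<le> (\<Sum>i<k. \<bar>h (\<omega> i) x - F x\<bar>)" unfolding T_def by (rule sum_abs)
    also have "\<dots> \<le> (\<Sum>i<k. C + C)"
    proof (intro sum_mono)
      fix i show "\<bar>h (\<omega> i) x - F x\<bar> \<le> C + C" using hb[OF \<omega>(1)[rule_format, of i] x] Fb[OF x] by linarith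
    qed
    finally show ?thesis by simp
  qed
  obtain a where a: "a \<in> space M"
    "(\<integral>x. (T x + h a x - F x)\<^sup>2 \<partial>P) \<le> (\<integral>x. (T x)\<^sup>2 \<partial>P) + C\<^sup>2"
    using maurey_step[OF pM pP hm hb Fm Fe Tm Tb] by blast
  define \<omega>' where "\<omega>' = fun_upd \<omega> k a"
  have "(\<Sum>i<Suc k. h (\<omega>' i) x - F x) = T x + h a x - F x" for x
    unfolding T_def \<omega>'_def by simp
  then have "(\<integral>x. (\<Sum>i<Suc k. h (\<omega>' i) x - F x)\<^sup>2 \<partial>P) \<le> real (Suc k) * C\<^sup>2"
    using a(2) \<omega>(2) unfolding T_def by (simp add: algebra_simps)
  moreover have "\<forall>i. \<omega>' i \<in> space M" using \<omega>(1) a(1) unfolding \<omega>'_def by simp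
  ultimately show ?case by blast
qed

lemma relu_scale: "0 \<le> k \<Longrightarrow> relu (k * y) = k * relu y"
  unfolding relu_def by (metis max_mult_distrib_left mult_zero_right)

lemma inner_cube_bound:
  fixes w x :: "real^'d"
  assumes "x \<in> unit_cube"
  shows "\<bar>w \<bullet> x\<bar> \<le> l1norm w"
proof -
  have "\<bar>w \<bullet> x\<bar> = \<bar>\<Sum>i\<in>UNIV. w$i * x$i\<bar>" by (simp add: inner_vec_def)
  also have "\<dots> \<le> (\<Sum>i\<in>UNIV. \<bar>w$i * x$i\<bar>)" by (rule sum_abs)
  also have "\<dots> \<le> (\<Sum>i\<in>UNIV. \<bar>w$i\<bar>)"
  proof (rule sum_mono)
    fix i
    have "0 \<le> x$i" "x$i \<le> 1" using assms by (auto simp: unit_cube_def)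
    then show "\<bar>w$i * x$i\<bar> \<le> \<bar>w$i\<bar>" by (simp add: abs_mult mult_left_le)
  qed
  finally show ?thesis by (simp add: l1norm_def)
qed

lemma neuron_bound:
  fixes w1 x :: "real^'d"
  assumes "x \<in> unit_cube"
  shows "\<bar>w2 * relu (w1 \<bullet> x - b)\<bar> \<le> \<bar>w2\<bar> * (l1norm w1 + \<bar>b\<bar>)"
proof -
  have "\<bar>relu (w1 \<bullet> x - b)\<bar> \<le> l1norm w1 + \<bar>b\<bar>"
    using inner_cube_bound[OF assms, of w1] unfolding relu_def by auto
  then show ?thesis by (simp add: abs_mult mult_left_mono)
qed

lemma zero_one_cube: "(0::real^'d) \<in> unit_cube" "(\<chi> i. 1 :: real^'d) \<in> unit_cube" "(0::real^'d) \<noteq> (\<chi> i. 1)"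
  by (auto simp: unit_cube_def vec_eq_iff)

lemma neuron_sampled:
  fixes w :: "real^'d" and b c :: real
  shows "\<exists>x1 x2 a d. x1 \<in> unit_cube \<and> x2 \<in> unit_cube \<and> x1 \<noteq> x2 \<and>
     (\<forall>x\<in>unit_cube. c * relu (w \<bullet> x - b) =
        (let w1 = (1 / (norm (x2 - x1))\<^sup>2) *\<^sub>R (x2 - x1); b1 = w1 \<bullet> x1 in a * relu (w1 \<bullet> x - b1)) + d)"
proof -
  define p :: "real^'d" where "p = (\<chi> i. if w$i < 0 then 1 else 0)"
  define q :: "real^'d" where "q = (\<chi> i. if w$i > 0 then 1 else 0)"
  define L where "L = l1norm w"
  have pq: "w \<bullet> p \<le> w \<bullet> x \<and> w \<bullet> x \<le> w \<bullet> q" if "x \<in> unit_cube" for x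
  proof -
    have "0 \<le> x$i \<and> x$i \<le> 1" for i using that by (auto simp: unit_cube_def)
    then have "w$i * p$i \<le> w$i * x$i \<and> w$i * x$i \<le> w$i * q$i" for i
      unfolding p_def q_def by (auto simp: mult_le_cancel_left1 mult_le_cancel_left2 mult_le_0_iff)
    then show ?thesis by (auto simp: inner_vec_def intro!: sum_mono)
  qed
  have qpL: "w \<bullet> q - w \<bullet> p = L"
  proof -
    have "w \<bullet> q - w \<bullet> p = (\<Sum>i\<in>UNIV. w$i * q$i - w$i * p$i)" by (simp add: inner_vec_def sum_subtractf)
    also have "\<dots> = (\<Sum>i\<in>UNIV. \<bar>w$i\<bar>)" by (rule sum.cong) (auto simp: p_def q_def)
    finally show ?thesis by (simp add: L_def l1norm_def)
  qed
  have wiL: "\<bar>w$i\<bar> \<le> L" for i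
    unfolding L_def l1norm_def by (rule member_le_sum) auto
  show ?thesis
  proof (cases "w = 0 \<or> w \<bullet> q \<le> b")
    case True
    show ?thesis
    proof (cases "w = 0")
      case True
      show ?thesis
        by (rule exI[of _ 0], rule exI[of _ "\<chi> i. 1"], rule exI[of _ 0], rule exI[of _ "c * relu (-b)"])
           (use zero_one_cube True in auto)
    next
      case False
      then have "w \<bullet> q \<le> b" using \<open>w = 0 \<or> w \<bullet> q \<le> b\<close> by auto
      then have "relu (w \<bullet> x - b) = 0" if "x \<in> unit_cube" for x
        using pq[OF that] unfolding relu_def by auto
      then show ?thesis
        by (intro exI[of _ 0] exI[of _ "\<chi> i. 1"] exI[of _ "0::real"]) (use zero_one_cube in auto)
    qed
  next
    case False
    then have w0: "w \<noteq> 0" and bq: "b < w \<bullet> q" by auto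
    obtain j where "w$j \<noteq> 0" using w0 by (auto simp: vec_eq_iff)
    then have Lpos: "0 < L" using wiL[of j] by linarith
    define t where "t = max 0 ((b - w \<bullet> p) / L)"
    have t0: "0 \<le> t" and t1: "t < 1" unfolding t_def using bq qpL Lpos by (auto simp: field_simps)
    define s where "s = (1 - t) / L"
    have s0: "0 < s" unfolding s_def using t1 Lpos by auto
    define x1 where "x1 = p + t *\<^sub>R (q - p)"
    define x2 where "x2 = x1 + s *\<^sub>R w"
    have x1i: "x1$i = (if w$i > 0 then t else if w$i < 0 then 1 - t else 0)" for i
      unfolding x1_def p_def q_def by auto
    have swi: "s * \<bar>w$i\<bar> \<le> 1 - t" for i
    proof -
      have "s * \<bar>w$i\<bar> \<le> s * L" using wiL[of i] s0 by (intro mult_left_mono) auto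
      also have "\<dots> = 1 - t" unfolding s_def using Lpos by simp
      finally show ?thesis .
    qed
    have x1c: "x1 \<in> unit_cube" unfolding unit_cube_def using x1i t0 t1 by auto
    have x2c: "x2 \<in> unit_cube" unfolding unit_cube_def
    proof (intro CollectI allI)
      fix i
      have "x2$i = x1$i + s * w$i" unfolding x2_def by simp
      moreover have "s * w$i \<le> s * \<bar>w$i\<bar>" "s * (- w$i) \<le> s * \<bar>w$i\<bar>" using s0
        by (intro mult_left_mono; simp)+
      then have "s * w$i \<le> 1 - t" "- (s * w$i) \<le> 1 - t" using swi[of i] by auto
      moreover have "x1$i = (if w$i > 0 then t else if w$i < 0 then 1 - t else 0)" by (rule x1i)
      ultimately show "0 \<le> x2$i \<and> x2$i \<le> 1"
      proof (cases "w$i < 0")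
        case True
        then have "s * w$i < 0" using s0 mult_pos_neg by blast
        then show ?thesis using \<open>x2$i = x1$i + s * w$i\<close> \<open>- (s * w$i) \<le> 1 - t\<close> True
          x1i[of i] t0 t1 by auto
      next
        case False
        then have "0 \<le> s * w$i" using s0 by simp
        then show ?thesis using \<open>x2$i = x1$i + s * w$i\<close> \<open>s * w$i \<le> 1 - t\<close> False
          x1i[of i] t0 t1 by auto
      qed
    qed
    have x21: "x2 - x1 = s *\<^sub>R w" unfolding x2_def by simp
    have ne: "x1 \<noteq> x2" using x21 s0 w0 by auto
    have wx1: "w \<bullet> x1 = max b (w \<bullet> p)"
    proof -
      have "w \<bullet> x1 = w \<bullet> p + t * L" unfolding x1_def using qpL by (simp add: inner_add_right inner_diff_right)
      also have "t * L = max 0 (b - w \<bullet> p)" unfolding t_def using Lpos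
        by (cases "b - w \<bullet> p \<le> 0") (auto simp: max_def field_simps)
      finally show ?thesis by linarith
    qed
    define \<kappa> where "\<kappa> = s * (norm w)\<^sup>2"
    have kpos: "0 < \<kappa>" unfolding \<kappa>_def using s0 w0 by auto
    define w1 where "w1 = (1 / (norm (x2 - x1))\<^sup>2) *\<^sub>R (x2 - x1)"
    have w1: "w1 = (1 / \<kappa>) *\<^sub>R w"
      unfolding w1_def x21 \<kappa>_def using s0 by (simp add: power2_eq_square field_simps)
    have key: "\<forall>x\<in>unit_cube. c * relu (w \<bullet> x - b) =
        (c * \<kappa>) * relu (w1 \<bullet> x - w1 \<bullet> x1) + c * (max b (w \<bullet> p) - b)"
    proof
      fix x :: "real^'d" assume x: "x \<in> unit_cube"
      have r1: "relu (w \<bullet> x - b) = relu (w \<bullet> x - w \<bullet> x1) + (max b (w \<bullet> p) - b)"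
        using pq[OF x] unfolding wx1 relu_def by auto
      have "w1 \<bullet> x - w1 \<bullet> x1 = (1 / \<kappa>) * (w \<bullet> x - w \<bullet> x1)" unfolding w1 by (simp add: right_diff_distrib)
      then have "\<kappa> * relu (w1 \<bullet> x - w1 \<bullet> x1) = relu (w \<bullet> x - w \<bullet> x1)"
        using kpos relu_scale[of \<kappa> "(1 / \<kappa>) * (w \<bullet> x - w \<bullet> x1)"] by simp
      then show "c * relu (w \<bullet> x - b) =
        (c * \<kappa>) * relu (w1 \<bullet> x - w1 \<bullet> x1) + c * (max b (w \<bullet> p) - b)"
        unfolding r1 by (simp add: algebra_simps)
    qed
    show ?thesis
      by (rule exI[of _ x1], rule exI[of _ x2], rule exI[of _ "c * \<kappa>"], rule exI[of _ "c * (max b (w \<bullet> p) - b)"])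
         (use x1c x2c ne key in \<open>simp add: w1_def Let_def\<close>)
  qed
qed

definition neur :: "real \<times> (real^'d) \<times> real \<Rightarrow> real^'d \<Rightarrow> real" where
  "neur \<omega> x = (case \<omega> of (b, w1, w2) \<Rightarrow> w2 * relu (w1 \<bullet> x - b))"

lemma msupp_compl: "- msupp \<mu> = \<Union>{U. open U \<and> \<not> 0 < emeasure \<mu> U}"
  unfolding msupp_def by auto

lemma msupp_closed: "closed (msupp \<mu>)"
  unfolding closed_def msupp_compl by auto

lemma msupp_AE:
  fixes \<mu> :: "'a::second_countable_topology measure"
  assumes "sets \<mu> = sets borel"
  shows "AE \<omega> in \<mu>. \<omega> \<in> msupp \<mu>"
proof -
  let ?F = "{U. open U \<and> \<not> 0 < emeasure \<mu> U}"
  obtain F' where F': "F' \<subseteq> ?F" "countable F'" "\<Union>F' = \<Union>?F"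
    using Lindelof[of ?F] by blast
  have "(\<Union>U\<in>F'. U) \<in> null_sets \<mu>"
  proof (rule null_sets_UN'[OF F'(2)])
    fix U assume "U \<in> F'"
    then have "open U" "emeasure \<mu> U = 0" using F'(1) by auto
    moreover have "U \<in> sets \<mu>" unfolding assms by (rule borel_open) fact
    ultimately show "U \<in> null_sets \<mu>" by (intro null_setsI)
  qed
  moreover have "- msupp \<mu> = (\<Union>U\<in>F'. U)" using F'(3) msupp_compl[of \<mu>] by simp
  then have "{\<omega>\<in>space \<mu>. \<omega> \<notin> msupp \<mu>} \<subseteq> (\<Union>U\<in>F'. U)" by blast
  ultimately show ?thesis by (rule AE_I')
qed

lemma neur_bound:
  assumes "x \<in> unit_cube" "\<omega> \<in> msupp \<mu>"
    "\<forall>(b, w1, w2)\<in>msupp \<mu>. \<bar>w2\<bar> * (l1norm w1 + \<bar>b\<bar>) \<le> C"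
  shows "\<bar>neur \<omega> x\<bar> \<le> C"
proof -
  obtain b w1 w2 where \<omega>: "\<omega> = (b, w1, w2)" by (cases \<omega>) auto
  show ?thesis using assms neuron_bound[OF assms(1), of w2 w1 b] unfolding \<omega> neur_def
    by fastforce
qed

lemma bound_f:
  assumes rep: "barron_represents \<mu> f unit_cube"
    and bd: "\<forall>(b, w1, w2)\<in>msupp \<mu>. \<bar>w2\<bar> * (l1norm w1 + \<bar>b\<bar>) \<le> C"
    and x: "x \<in> unit_cube"
  shows "\<bar>f x\<bar> \<le> C"
proof -
  interpret prob_space \<mu> using rep unfolding barron_represents_def by auto
  have sets: "sets \<mu> = sets borel" using rep unfolding barron_represents_def by auto
  have int: "integrable \<mu> (\<lambda>\<omega>. neur \<omega> x)" and fx: "f x = (\<integral>\<omega>. neur \<omega> x \<partial>\<mu>)"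
    using rep x unfolding barron_represents_def neur_def by blast+
  have "\<bar>f x\<bar> \<le> (\<integral>\<omega>. \<bar>neur \<omega> x\<bar> \<partial>\<mu>)" unfolding fx by (rule integral_abs_bound)
  also have "\<dots> \<le> (\<integral>\<omega>. C \<partial>\<mu>)"
    by (rule integral_mono_AE) (use int msupp_AE[OF sets] neur_bound[OF x _ bd] in auto)
  finally show ?thesis using prob_space by simp
qed

lemma neur_cont: "continuous_on UNIV (\<lambda>p. neur (fst p) (snd p))"
  unfolding neur_def relu_def case_prod_beta
  by (intro continuous_intros)

lemma id_meas:
  assumes "sets \<mu> = sets (borel :: ('a::second_countable_topology) measure)"
    and "sets \<pi> = sets (restrict_space (borel :: ('b::second_countable_topology) measure) X)"
  shows "(\<lambda>p. p) \<in> measurable (\<mu> \<Otimes>\<^sub>M \<pi>) (borel :: ('a \<times> 'b) measure)"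
proof -
  have m1: "measurable (\<mu> \<Otimes>\<^sub>M \<pi>) \<mu> = measurable (\<mu> \<Otimes>\<^sub>M \<pi>) borel"
    by (rule measurable_cong_sets[OF refl assms(1)])
  have m2: "measurable \<pi> borel = measurable (restrict_space borel X) borel"
    by (rule measurable_cong_sets[OF assms(2) refl])
  have f: "fst \<in> measurable (\<mu> \<Otimes>\<^sub>M \<pi>) borel"
    using measurable_fst[of \<mu> \<pi>] unfolding m1 .
  have "(\<lambda>x. x) \<in> measurable (restrict_space borel X) borel"
    by (rule measurable_restrict_space1) simp
  then have i: "(\<lambda>x. x) \<in> measurable \<pi> borel" unfolding m2 .
  have s: "snd \<in> measurable (\<mu> \<Otimes>\<^sub>M \<pi>) borel"
    using measurable_comp[OF measurable_snd[of \<mu> \<pi>] i] by (simp add: comp_def)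
  have "(\<lambda>p. (fst p, snd p)) \<in> measurable (\<mu> \<Otimes>\<^sub>M \<pi>) (borel \<Otimes>\<^sub>M borel)"
    by (rule measurable_Pair[OF f s])
  then show ?thesis unfolding borel_prod by simp
qed

lemma choice4:
  assumes "\<forall>i::nat. \<exists>a b c d. P i a b c d"
  shows "\<exists>A B C D. \<forall>i. P i (A i) (B i) (C i) (D i)"
  using assms by metis

theorem theorem2:
  fixes f :: "real^'d \<Rightarrow> real" and N1 :: nat and \<epsilon> :: real
    and \<pi> :: "(real^'d) measure"
  assumes "in_barron f unit_cube"
    and "\<exists>x\<in>unit_cube. f x \<noteq> 0"
    and "N1 > 0" and "\<epsilon> > 0"
    and "prob_space \<pi>" and "sets \<pi> = sets (restrict_space borel unit_cube)"
  shows "\<exists>\<Phi>. sampled_network unit_cube N1 \<Phi> \<and>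
           integrable \<pi> (\<lambda>x. (f x - \<Phi> x)\<^sup>2) \<and>
           (\<integral>x. (f x - \<Phi> x)\<^sup>2 \<partial>\<pi>) < (3 + \<epsilon>) * (barron_norm f unit_cube)\<^sup>2 / real N1"
proof -
  obtain x0 where x0: "x0 \<in> unit_cube" "f x0 \<noteq> 0" using assms(2) by blast
  let ?B = "barron_bounds f unit_cube"
  have Bne: "?B \<noteq> {}" using assms(1) unfolding in_barron_def .
  have Blow: "\<bar>f x0\<bar> \<le> C" if "C \<in> ?B" for C
    using that bound_f[OF _ _ x0(1)] unfolding barron_bounds_def by blast
  define n where "n = barron_norm f unit_cube"
  have n_ge: "\<bar>f x0\<bar> \<le> n" unfolding n_def barron_norm_def by (rule cInf_greatest[OF Bne Blow])
  then have npos: "0 < n" using x0(2) by linarith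
  have bdd: "bdd_below ?B" using Blow unfolding bdd_below_def by blast
  obtain C where C: "C \<in> ?B" "C < n + n/2"
    using cInf_lessD[OF Bne, of "n + n/2"] npos unfolding n_def barron_norm_def by auto
  have nC: "n \<le> C" unfolding n_def barron_norm_def by (rule cInf_lower[OF C(1) bdd])
  obtain \<mu> where rep: "barron_represents \<mu> f unit_cube"
    and bd: "\<forall>(b, w1, w2)\<in>msupp \<mu>. \<bar>w2\<bar> * (l1norm w1 + \<bar>b\<bar>) \<le> C"
    using C(1) unfolding barron_bounds_def by blast
  have p\<mu>: "prob_space \<mu>" and s\<mu>: "sets \<mu> = sets borel" using rep unfolding barron_represents_def by auto
  interpret M: prob_space \<mu> by fact
  have sp\<pi>: "space \<pi> = unit_cube"
    using sets_eq_imp_space_eq[OF assms(6)] by (simp add: space_restrict_space)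
  define S where "S = msupp \<mu>"
  have S_sets: "S \<in> sets \<mu>" unfolding s\<mu> S_def by (rule borel_closed[OF msupp_closed])
  define h where "h = (\<lambda>\<omega> x. if \<omega> \<in> S then neur \<omega> x else 0)"
  have Gm: "(\<lambda>p. neur (fst p) (snd p)) \<in> borel_measurable (\<mu> \<Otimes>\<^sub>M \<pi>)"
    using measurable_comp[OF id_meas[OF s\<mu> assms(6)] borel_measurable_continuous_onI[OF neur_cont]]
    by (simp add: comp_def)
  have "(\<lambda>p. if p \<in> fst -` S then neur (fst p) (snd p) else 0) \<in> borel_measurable (\<mu> \<Otimes>\<^sub>M \<pi>)"
  proof (rule measurable_If_set[OF Gm])
    show "fst -` S \<inter> space (\<mu> \<Otimes>\<^sub>M \<pi>) \<in> sets (\<mu> \<Otimes>\<^sub>M \<pi>)"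
      by (rule measurable_sets[OF measurable_fst S_sets])
  qed simp
  then have hm: "(\<lambda>(\<omega>, x). h \<omega> x) \<in> borel_measurable (\<mu> \<Otimes>\<^sub>M \<pi>)"
    unfolding h_def by (simp add: case_prod_beta')
  have C0: "0 \<le> C" using nC npos by linarith
  have hb: "\<bar>h \<omega> x\<bar> \<le> C" if "\<omega> \<in> space \<mu>" "x \<in> space \<pi>" for \<omega> x
    using neur_bound[of x \<omega> \<mu> C] that bd C0 sp\<pi> unfolding h_def S_def by auto
  have neur_m: "(\<lambda>\<omega>. neur \<omega> x) \<in> borel_measurable \<mu>" if "x \<in> space \<pi>" for x
    using measurable_compose[OF measurable_Pair2'[OF that] Gm] by simp
  have h_m: "(\<lambda>\<omega>. h \<omega> x) \<in> borel_measurable \<mu>" if "x \<in> space \<pi>" for x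
    using measurable_compose[OF measurable_Pair2'[OF that] hm] by simp
  have Fe: "f x = (\<integral>\<omega>. h \<omega> x \<partial>\<mu>)" if x: "x \<in> space \<pi>" for x
  proof -
    have "f x = (\<integral>\<omega>. neur \<omega> x \<partial>\<mu>)"
      using rep x sp\<pi> unfolding barron_represents_def neur_def by blast
    also have "\<dots> = (\<integral>\<omega>. h \<omega> x \<partial>\<mu>)"
    proof (rule integral_cong_AE[OF neur_m[OF x] h_m[OF x]])
      show "AE \<omega> in \<mu>. neur \<omega> x = h \<omega> x"
        using msupp_AE[OF s\<mu>] by eventually_elim (simp add: h_def S_def)
    qed
    finally show ?thesis .
  qed
  have "(\<lambda>x. \<integral>\<omega>. h \<omega> x \<partial>\<mu>) \<in> borel_measurable \<pi>"
  proof (rule M.borel_measurable_lebesgue_integral)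
    show "(\<lambda>(x, \<omega>). h \<omega> x) \<in> borel_measurable (\<pi> \<Otimes>\<^sub>M \<mu>)"
      using measurable_pair_swap[OF hm] by (simp add: case_prod_beta')
  qed
  then have Fm: "f \<in> borel_measurable \<pi>"
    using measurable_cong[of \<pi> f "\<lambda>x. \<integral>\<omega>. h \<omega> x \<partial>\<mu>"] Fe by simp
  have Fb: "\<bar>f x\<bar> \<le> C" if "x \<in> space \<pi>" for x
    using bound_f[OF rep bd] that sp\<pi> by simp
  obtain \<omega> where \<omega>: "\<forall>i. \<omega> i \<in> space \<mu>"
    "(\<integral>x. (\<Sum>i<N1. h (\<omega> i) x - f x)\<^sup>2 \<partial>\<pi>) \<le> real N1 * C\<^sup>2"
    using maurey[OF p\<mu> assms(5) hm hb Fm Fe Fb] by blast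
  define \<theta> where "\<theta> = (\<lambda>i. if \<omega> i \<in> S then \<omega> i else (0, 0, 0))"
  have h\<theta>: "h (\<omega> i) x = snd (snd (\<theta> i)) * relu (fst (snd (\<theta> i)) \<bullet> x - fst (\<theta> i))" for i x
    unfolding h_def \<theta>_def neur_def by (simp add: case_prod_beta')
  have "\<forall>i. \<exists>x1 x2 a d. x1 \<in> unit_cube \<and> x2 \<in> unit_cube \<and> x1 \<noteq> x2 \<and>
     (\<forall>x\<in>unit_cube. (snd (snd (\<theta> i)) / real N1) * relu (fst (snd (\<theta> i)) \<bullet> x - fst (\<theta> i)) =
        (let w1 = (1 / (norm (x2 - x1))\<^sup>2) *\<^sub>R (x2 - x1); b1 = w1 \<bullet> x1 in a * relu (w1 \<bullet> x - b1)) + d)"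
    by (intro allI neuron_sampled)
  then obtain X1 X2 A D where nd: "\<forall>i. X1 i \<in> unit_cube \<and> X2 i \<in> unit_cube \<and> X1 i \<noteq> X2 i \<and>
     (\<forall>x\<in>unit_cube. (snd (snd (\<theta> i)) / real N1) * relu (fst (snd (\<theta> i)) \<bullet> x - fst (\<theta> i)) =
        (let w1 = (1 / (norm (X2 i - X1 i))\<^sup>2) *\<^sub>R (X2 i - X1 i); b1 = w1 \<bullet> X1 i in A i * relu (w1 \<bullet> x - b1)) + D i)"
    using choice4[where P="\<lambda>i x1 x2 a d. x1 \<in> unit_cube \<and> x2 \<in> unit_cube \<and> x1 \<noteq> x2 \<and>
     (\<forall>x\<in>unit_cube. (snd (snd (\<theta> i)) / real N1) * relu (fst (snd (\<theta> i)) \<bullet> x - fst (\<theta> i)) =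
        (let w1 = (1 / (norm (x2 - x1))\<^sup>2) *\<^sub>R (x2 - x1); b1 = w1 \<bullet> x1 in a * relu (w1 \<bullet> x - b1)) + d)"]
    by blast
  define Lt where "Lt = (\<lambda>i x. (let w1 = (1 / (norm (X2 i - X1 i))\<^sup>2) *\<^sub>R (X2 i - X1 i); b1 = w1 \<bullet> X1 i in A i * relu (w1 \<bullet> x - b1)))"
  define b2 where "b2 = - (\<Sum>i<N1. D i)"
  define \<Phi> where "\<Phi> = (\<lambda>x. (\<Sum>i<N1. Lt i x) - b2)"
  have samp: "sampled_network unit_cube N1 \<Phi>"
    unfolding sampled_network_def
    by (rule exI[of _ X1], rule exI[of _ X2], rule exI[of _ A], rule exI[of _ b2])
       (use nd in \<open>simp add: \<Phi>_def Lt_def\<close>)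
  have N0: "0 < real N1" using assms(3) by simp
  have diff: "f x - \<Phi> x = - (1 / real N1) * (\<Sum>i<N1. h (\<omega> i) x - f x)" if x: "x \<in> unit_cube" for x
  proof -
    have "Lt i x = h (\<omega> i) x / real N1 - D i" for i
      using nd x unfolding h\<theta> Lt_def by (auto simp: field_simps)
    then have "\<Phi> x = (\<Sum>i<N1. h (\<omega> i) x / real N1)"
      unfolding \<Phi>_def b2_def by (simp add: sum_subtractf)
    also have "\<dots> = (1 / real N1) * (\<Sum>i<N1. h (\<omega> i) x)"
      by (simp add: sum_divide_distrib)
    finally have "\<Phi> x = (1 / real N1) * (\<Sum>i<N1. h (\<omega> i) x)" .
    moreover have "(\<Sum>i<N1. h (\<omega> i) x - f x) = (\<Sum>i<N1. h (\<omega> i) x) - real N1 * f x"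
      by (simp add: sum_subtractf)
    ultimately show ?thesis using N0 by (simp add: field_simps)
  qed
  define U where "U = (\<lambda>x. (\<Sum>i<N1. h (\<omega> i) x - f x))"
  have sq: "(f x - \<Phi> x)\<^sup>2 = (1 / (real N1)\<^sup>2) * (U x)\<^sup>2" if "x \<in> space \<pi>" for x
  proof -
    have "f x - \<Phi> x = - (1 / real N1) * U x" using diff[of x] that sp\<pi> unfolding U_def by simp
    then have "(f x - \<Phi> x)\<^sup>2 = (- (1 / real N1) * U x)\<^sup>2" by simp
    also have "\<dots> = (1 / (real N1)\<^sup>2) * (U x)\<^sup>2" by (simp add: power_mult_distrib power_one_over power_divide)
    finally show ?thesis .
  qed
  have hx: "(\<lambda>x. h a x) \<in> borel_measurable \<pi>" if "a \<in> space \<mu>" for a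
    using measurable_compose[OF measurable_Pair1'[OF that] hm] by simp
  have Um: "U \<in> borel_measurable \<pi>"
    unfolding U_def using hx \<omega>(1) Fm
    by (intro borel_measurable_sum borel_measurable_diff) auto
  have Ub: "\<bar>U x\<bar> \<le> real N1 * (C + C)" if x: "x \<in> space \<pi>" for x
  proof -
    have "\<bar>U x\<bar> \<le> (\<Sum>i<N1. \<bar>h (\<omega> i) x - f x\<bar>)" unfolding U_def by (rule sum_abs)
    also have "\<dots> \<le> (\<Sum>i<N1. C + C)"
    proof (intro sum_mono)
      fix i show "\<bar>h (\<omega> i) x - f x\<bar> \<le> C + C" using hb[OF \<omega>(1)[rule_format, of i] x] Fb[OF x] by linarith
    qed
    finally show ?thesis by simp
  qed
  interpret PP: prob_space \<pi> by fact
  have Ui: "integrable \<pi> (\<lambda>x. (U x)\<^sup>2)"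
    by (rule PP.integrable_const_bound[where B="(real N1 * (C + C))\<^sup>2"])
       (use Um Ub in \<open>auto intro!: AE_I2 sq_bound_abs sq_bound\<close>)
  have int: "integrable \<pi> (\<lambda>x. (f x - \<Phi> x)\<^sup>2)"
    using Bochner_Integration.integrable_cong[OF refl sq, of \<pi>] Ui by simp
  have "(\<integral>x. (f x - \<Phi> x)\<^sup>2 \<partial>\<pi>) = (\<integral>x. (1 / (real N1)\<^sup>2) * (U x)\<^sup>2 \<partial>\<pi>)"
    by (rule Bochner_Integration.integral_cong[OF refl sq])
  also have "\<dots> = (1 / (real N1)\<^sup>2) * (\<integral>x. (U x)\<^sup>2 \<partial>\<pi>)" by simp
  also have "\<dots> \<le> (1 / (real N1)\<^sup>2) * (real N1 * C\<^sup>2)"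
    using \<omega>(2) unfolding U_def by (intro mult_left_mono) auto
  also have "\<dots> = C\<^sup>2 / real N1" using N0 by (simp add: power2_eq_square field_simps)
  also have "\<dots> < (3 + \<epsilon>) * n\<^sup>2 / real N1"
  proof (rule divide_strict_right_mono[OF _ N0])
    have "C * C < (n + n/2) * (n + n/2)" using C(2) C0 by (intro mult_strict_mono) auto
    moreover have "0 < \<epsilon> * (n * n)" using assms(4) npos by simp
    moreover have "(n + n/2) * (n + n/2) = 9/4 * (n * n)" by (simp add: algebra_simps)
    moreover have "0 < n * n" using npos by simp
    ultimately show "C\<^sup>2 < (3 + \<epsilon>) * n\<^sup>2" unfolding power2_eq_square distrib_right by linarith
  qed
  finally show ?thesis using samp int unfolding n_def by blast
qed

end
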